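(* Let $G$ be a finite group and $M$ a finitely generated (hence finite) $\mathbb{B}[G]$-module. Then $M$ is isomorphic (as a $\mathbb{B}[G]$-module) to a submodule of $\mathbb{B}[G]^n$ for some $n$.
   Context: $\mathbb{B}=\{0,1\}$ is the Boolean semifield with $1+1=1$ and $\mathbb{B}[G]$ is the group semiring. *)

theory Defs
  imports "HOL-Algebra.Group"
begin

text \<open>The group semiring B[G] of a finite group G over the Boolean semifield B:
  an element sum_g a_g g with a_g in B is identified with its support, a subset of carrier G.
  Addition is union (1+1=1), zero is the empty set, one is the singleton of the unit,
  multiplication is the set product.\<close>

definition bg_mult :: "('g, 'b) monoid_scheme \<Rightarrow> 'g set \<Rightarrow> 'g set \<Rightarrow> 'g set" where
  "bg_mult G A B = {a \<otimes>\<^bsub>G\<^esub> b | a b. a \<in> A \<and> b \<in> B}"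

definition bg_elems :: "('g, 'b) monoid_scheme \<Rightarrow> 'g set set" where
  "bg_elems G = Pow (carrier G)"

definition bg_module ::
  "('g, 'b) monoid_scheme \<Rightarrow> 'm set \<Rightarrow> ('m \<Rightarrow> 'm \<Rightarrow> 'm) \<Rightarrow> 'm \<Rightarrow> ('g set \<Rightarrow> 'm \<Rightarrow> 'm) \<Rightarrow> bool" where
  "bg_module G M add zero smul \<longleftrightarrow>
     zero \<in> M \<and>
     (\<forall>x\<in>M. \<forall>y\<in>M. add x y \<in> M) \<and>
     (\<forall>A\<in>bg_elems G. \<forall>x\<in>M. smul A x \<in> M) \<and>
     (\<forall>x\<in>M. \<forall>y\<in>M. \<forall>z\<in>M. add (add x y) z = add x (add y z)) \<and>
     (\<forall>x\<in>M. \<forall>y\<in>M. add x y = add y x) \<and>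
     (\<forall>x\<in>M. add zero x = x) \<and>
     (\<forall>A\<in>bg_elems G. \<forall>x\<in>M. \<forall>y\<in>M. smul A (add x y) = add (smul A x) (smul A y)) \<and>
     (\<forall>A\<in>bg_elems G. \<forall>B\<in>bg_elems G. \<forall>x\<in>M. smul (A \<union> B) x = add (smul A x) (smul B x)) \<and>
     (\<forall>A\<in>bg_elems G. \<forall>B\<in>bg_elems G. \<forall>x\<in>M. smul (bg_mult G A B) x = smul A (smul B x)) \<and>
     (\<forall>x\<in>M. smul {\<one>\<^bsub>G\<^esub>} x = x) \<and>
     (\<forall>x\<in>M. smul {} x = zero) \<and>
     (\<forall>A\<in>bg_elems G. smul A zero = zero)"

definition bg_submodule ::
  "('g, 'b) monoid_scheme \<Rightarrow> 'm set \<Rightarrow> 'm set \<Rightarrow> ('m \<Rightarrow> 'm \<Rightarrow> 'm) \<Rightarrow> 'm \<Rightarrow> ('g set \<Rightarrow> 'm \<Rightarrow> 'm) \<Rightarrow> bool" where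
  "bg_submodule G N M add zero smul \<longleftrightarrow>
     N \<subseteq> M \<and> zero \<in> N \<and>
     (\<forall>x\<in>N. \<forall>y\<in>N. add x y \<in> N) \<and>
     (\<forall>A\<in>bg_elems G. \<forall>x\<in>N. smul A x \<in> N)"

definition bg_fin_gen ::
  "('g, 'b) monoid_scheme \<Rightarrow> 'm set \<Rightarrow> ('m \<Rightarrow> 'm \<Rightarrow> 'm) \<Rightarrow> 'm \<Rightarrow> ('g set \<Rightarrow> 'm \<Rightarrow> 'm) \<Rightarrow> bool" where
  "bg_fin_gen G M add zero smul \<longleftrightarrow>
     (\<exists>S. finite S \<and> S \<subseteq> M \<and>
        (\<forall>N. bg_submodule G N M add zero smul \<and> S \<subseteq> N \<longrightarrow> N = M))"

text \<open>The free module B[G]^n: tuples indexed by {0..<n}, encoded extensionally as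
  functions nat => 'g set that are empty outside {0..<n}; operations componentwise.\<close>

definition bg_free :: "('g, 'b) monoid_scheme \<Rightarrow> nat \<Rightarrow> (nat \<Rightarrow> 'g set) set" where
  "bg_free G n = {v. (\<forall>i<n. v i \<in> bg_elems G) \<and> (\<forall>i\<ge>n. v i = {})}"

definition bg_free_add :: "(nat \<Rightarrow> 'g set) \<Rightarrow> (nat \<Rightarrow> 'g set) \<Rightarrow> (nat \<Rightarrow> 'g set)" where
  "bg_free_add v w = (\<lambda>i. v i \<union> w i)"

definition bg_free_zero :: "nat \<Rightarrow> 'g set" where
  "bg_free_zero = (\<lambda>i. {})"

definition bg_free_smul :: "('g, 'b) monoid_scheme \<Rightarrow> 'g set \<Rightarrow> (nat \<Rightarrow> 'g set) \<Rightarrow> (nat \<Rightarrow> 'g set)" where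
  "bg_free_smul G A v = (\<lambda>i. bg_mult G A (v i))"

definition bg_module_hom ::
  "('g, 'b) monoid_scheme \<Rightarrow> ('m \<Rightarrow> 'n) \<Rightarrow>
   'm set \<Rightarrow> ('m \<Rightarrow> 'm \<Rightarrow> 'm) \<Rightarrow> 'm \<Rightarrow> ('g set \<Rightarrow> 'm \<Rightarrow> 'm) \<Rightarrow>
   'n set \<Rightarrow> ('n \<Rightarrow> 'n \<Rightarrow> 'n) \<Rightarrow> 'n \<Rightarrow> ('g set \<Rightarrow> 'n \<Rightarrow> 'n) \<Rightarrow> bool" where
  "bg_module_hom G f M add zero smul M' add' zero' smul' \<longleftrightarrow>
     (\<forall>x\<in>M. f x \<in> M') \<and>
     (\<forall>x\<in>M. \<forall>y\<in>M. f (add x y) = add' (f x) (f y)) \<and>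
     f zero = zero' \<and>
     (\<forall>A\<in>bg_elems G. \<forall>x\<in>M. f (smul A x) = smul' A (f x))"

end

theory Submission
  imports Defs
begin

locale bgm = group G for G :: "('g, 'b) monoid_scheme" (structure) +
  fixes M :: "'m set" and add :: "'m \<Rightarrow> 'm \<Rightarrow> 'm" and zero :: 'm
    and smul :: "'g set \<Rightarrow> 'm \<Rightarrow> 'm"
  assumes finG: "finite (carrier G)"
    and md: "bg_module G M add zero smul"
begin

definition le where "le x y \<longleftrightarrow> add x y = y"

lemma zero_in: "zero \<in> M" using md unfolding bg_module_def by auto
lemma add_in: "x \<in> M \<Longrightarrow> y \<in> M \<Longrightarrow> add x y \<in> M" using md unfolding bg_module_def by auto
lemma smul_in: "A \<subseteq> carrier G \<Longrightarrow> x \<in> M \<Longrightarrow> smul A x \<in> M"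
  using md unfolding bg_module_def bg_elems_def by auto
lemma add_assoc: "x \<in> M \<Longrightarrow> y \<in> M \<Longrightarrow> z \<in> M \<Longrightarrow> add (add x y) z = add x (add y z)"
  using md unfolding bg_module_def by auto
lemma add_comm: "x \<in> M \<Longrightarrow> y \<in> M \<Longrightarrow> add x y = add y x"
  using md unfolding bg_module_def by auto
lemma add_zero: "x \<in> M \<Longrightarrow> add zero x = x"
  using md unfolding bg_module_def by auto
lemma smul_add: "A \<subseteq> carrier G \<Longrightarrow> x \<in> M \<Longrightarrow> y \<in> M \<Longrightarrow> smul A (add x y) = add (smul A x) (smul A y)"
  using md unfolding bg_module_def bg_elems_def by auto
lemma smul_un: "A \<subseteq> carrier G \<Longrightarrow> B \<subseteq> carrier G \<Longrightarrow> x \<in> M \<Longrightarrow> smul (A \<union> B) x = add (smul A x) (smul B x)"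
  using md unfolding bg_module_def bg_elems_def by auto
lemma smul_mult: "A \<subseteq> carrier G \<Longrightarrow> B \<subseteq> carrier G \<Longrightarrow> x \<in> M \<Longrightarrow> smul (bg_mult G A B) x = smul A (smul B x)"
  using md unfolding bg_module_def bg_elems_def by auto
lemma smul_one: "x \<in> M \<Longrightarrow> smul {\<one>} x = x"
  using md unfolding bg_module_def by auto
lemma smul_empty: "x \<in> M \<Longrightarrow> smul {} x = zero"
  using md unfolding bg_module_def by auto
lemma smul_zero: "A \<subseteq> carrier G \<Longrightarrow> smul A zero = zero"
  using md unfolding bg_module_def bg_elems_def by auto

lemma add_idem: "x \<in> M \<Longrightarrow> add x x = x"
  using smul_un[of "{\<one>}" "{\<one>}" x] smul_one by simp

lemma le_refl: "x \<in> M \<Longrightarrow> le x x" using add_idem le_def by simp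

lemma le_zero: "u \<in> M \<Longrightarrow> le zero u" using add_zero le_def by simp

lemma le_antisym: "x \<in> M \<Longrightarrow> y \<in> M \<Longrightarrow> le x y \<Longrightarrow> le y x \<Longrightarrow> x = y"
  unfolding le_def by (metis add_comm)

lemma le_trans: "x \<in> M \<Longrightarrow> y \<in> M \<Longrightarrow> z \<in> M \<Longrightarrow> le x y \<Longrightarrow> le y z \<Longrightarrow> le x z"
  unfolding le_def by (metis add_assoc)

lemma le_add_iff: "p \<in> M \<Longrightarrow> q \<in> M \<Longrightarrow> u \<in> M \<Longrightarrow> le (add p q) u \<longleftrightarrow> le p u \<and> le q u"
proof
  assume p: "p \<in> M" and q: "q \<in> M" and u: "u \<in> M" and h: "le (add p q) u"
  have "add p u = add p (add (add p q) u)" using h le_def by simp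
  also have "\<dots> = add (add (add p p) q) u" using p q u add_in add_assoc by simp
  also have "\<dots> = u" using h le_def add_idem p by simp
  finally have 1: "le p u" using le_def by simp
  have "add q u = add q (add (add p q) u)" using h le_def by simp
  also have "\<dots> = add (add p (add q q)) u" using p q u add_in add_assoc add_comm by metis
  also have "\<dots> = u" using h le_def add_idem q by simp
  finally have 2: "le q u" using le_def by simp
  show "le p u \<and> le q u" using 1 2 by simp
next
  assume p: "p \<in> M" and q: "q \<in> M" and u: "u \<in> M" and h: "le p u \<and> le q u"
  have "add (add p q) u = add p (add q u)" using p q u add_assoc by simp
  also have "\<dots> = u" using h le_def by simp
  finally show "le (add p q) u" using le_def by simp
qed

lemma bg_mult_single: "bg_mult G {a} A = (\<lambda>b. a \<otimes> b) ` A"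
  unfolding bg_mult_def by auto

lemma smul_comp: "a \<in> carrier G \<Longrightarrow> b \<in> carrier G \<Longrightarrow> x \<in> M \<Longrightarrow> smul {a} (smul {b} x) = smul {a \<otimes> b} x"
  using smul_mult[of "{a}" "{b}" x] bg_mult_single[of a "{b}"] by simp

lemma smul_inv: "a \<in> carrier G \<Longrightarrow> x \<in> M \<Longrightarrow> smul {inv a} (smul {a} x) = x"
  using smul_comp[of "inv a" a x] smul_one by simp

lemma smul_inv2: "a \<in> carrier G \<Longrightarrow> x \<in> M \<Longrightarrow> smul {a} (smul {inv a} x) = x"
  using smul_comp[of a "inv a" x] smul_one by simp

lemma smul_mono: "a \<in> carrier G \<Longrightarrow> x \<in> M \<Longrightarrow> y \<in> M \<Longrightarrow> le x y \<Longrightarrow> le (smul {a} x) (smul {a} y)"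
  unfolding le_def using smul_add[of "{a}" x y] by simp

lemma le_shift: "a \<in> carrier G \<Longrightarrow> x \<in> M \<Longrightarrow> u \<in> M \<Longrightarrow> le (smul {a} x) u \<longleftrightarrow> le x (smul {inv a} u)"
  by (metis smul_mono smul_inv smul_inv2 smul_in inv_closed empty_subsetI insert_subset)

lemma smul_le_iff:
  assumes "finite A" "A \<subseteq> carrier G" "x \<in> M" "u \<in> M"
  shows "le (smul A x) u \<longleftrightarrow> (\<forall>a\<in>A. le (smul {a} x) u)"
  using assms(1,2)
proof (induction A rule: finite_induct)
  case empty
  then show ?case using smul_empty le_zero assms by simp
next
  case (insert a A)
  have "smul (insert a A) x = add (smul {a} x) (smul A x)"
    using smul_un[of "{a}" A x] insert assms by simp
  then show ?case using insert le_add_iff[of "smul {a} x" "smul A x" u] smul_in assms by simp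
qed

lemma M_finite:
  assumes "bg_fin_gen G M add zero smul"
  shows "finite M"
proof -
  obtain S where S: "finite S" "S \<subseteq> M"
    and gen: "\<And>N. bg_submodule G N M add zero smul \<Longrightarrow> S \<subseteq> N \<Longrightarrow> N = M"
    using assms unfolding bg_fin_gen_def by blast
  define P where "P = (\<lambda>(g,s). smul {g} s) ` (carrier G \<times> S)"
  have finP: "finite P" unfolding P_def using S finG by simp
  have PM: "P \<subseteq> M" unfolding P_def using S smul_in by auto
  have Pcl: "smul {a} p \<in> P" if aG: "a \<in> carrier G" and pP: "p \<in> P" for a p
  proof -
    obtain g s where gs: "g \<in> carrier G" "s \<in> S" "p = smul {g} s" using pP unfolding P_def by auto
    then have "smul {a} p = smul {a \<otimes> g} s" using smul_comp aG S by auto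
    then show ?thesis unfolding P_def using gs aG by force
  qed
  define N where "N = {x \<in> M. \<forall>u\<in>M. (\<forall>p\<in>P. le p x \<longrightarrow> le p u) \<longrightarrow> le x u}"
  have SN: "S \<subseteq> N"
  proof
    fix s assume s: "s \<in> S"
    have "s \<in> P" unfolding P_def using s smul_one S by (auto intro!: image_eqI[of _ _ "(\<one>, s)"])
    then show "s \<in> N" unfolding N_def using s S le_refl by auto
  qed
  have sub: "bg_submodule G N M add zero smul"
    unfolding bg_submodule_def
  proof (intro conjI ballI)
    show "N \<subseteq> M" unfolding N_def by auto
    show "zero \<in> N" unfolding N_def using zero_in le_zero by auto
  next
    fix x y assume x: "x \<in> N" and y: "y \<in> N"
    have xM: "x \<in> M" and yM: "y \<in> M" using x y unfolding N_def by auto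
    show "add x y \<in> N" unfolding N_def
    proof (intro CollectI conjI ballI impI)
      show "add x y \<in> M" using xM yM add_in by simp
      fix u assume u: "u \<in> M" and h: "\<forall>p\<in>P. le p (add x y) \<longrightarrow> le p u"
      have "\<forall>p\<in>P. le p x \<longrightarrow> le p u"
        using h PM le_trans[of _ x "add x y"] le_add_iff[of x y "add x y"] le_refl add_in xM yM by blast
      then have 1: "le x u" using x u unfolding N_def by auto
      have "\<forall>p\<in>P. le p y \<longrightarrow> le p u"
        using h PM le_trans[of _ y "add x y"] le_add_iff[of x y "add x y"] le_refl add_in xM yM by blast
      then have 2: "le y u" using y u unfolding N_def by auto
      show "le (add x y) u" using 1 2 le_add_iff xM yM u by simp
    qed
  next
    fix A x assume A: "A \<in> bg_elems G" and x: "x \<in> N"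
    have AG: "A \<subseteq> carrier G" using A unfolding bg_elems_def by auto
    have finA: "finite A" using AG finG finite_subset by auto
    have xM: "x \<in> M" using x unfolding N_def by auto
    have AxM: "smul A x \<in> M" using smul_in AG xM by simp
    show "smul A x \<in> N" unfolding N_def
    proof (intro CollectI conjI ballI impI)
      show "smul A x \<in> M" by fact
      fix u assume u: "u \<in> M" and h: "\<forall>p\<in>P. le p (smul A x) \<longrightarrow> le p u"
      have "le (smul {a} x) u" if a: "a \<in> A" for a
      proof -
        have aG: "a \<in> carrier G" using a AG by auto
        have uM': "smul {inv a} u \<in> M" using smul_in aG u by simp
        have "le x (smul {inv a} u)"
        proof -
          have "le p (smul {inv a} u)" if p: "p \<in> P" "le p x" for p
          proof -
            have pM: "p \<in> M" using p PM by auto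
            have apM: "smul {a} p \<in> M" using smul_in aG pM by simp
            have "le (smul {a} p) (smul {a} x)" using smul_mono aG pM xM p by simp
            moreover have "le (smul {a} x) (smul A x)"
              using smul_le_iff[OF finA AG xM AxM] le_refl AxM a by simp
            ultimately have "le (smul {a} p) (smul A x)"
              using le_trans apM smul_in aG xM AxM by blast
            then have "le (smul {a} p) u" using h Pcl aG p by blast
            then show ?thesis using le_shift aG pM u by simp
          qed
          then show ?thesis using x uM' unfolding N_def by auto
        qed
        then show ?thesis using le_shift aG xM u by simp
      qed
      then show "le (smul A x) u" using smul_le_iff[OF finA AG xM u] by simp
    qed
  qed
  have NM: "N = M" using gen[OF sub SN] .
  have "inj_on (\<lambda>x. {p\<in>P. le p x}) N"
  proof (rule inj_onI)
    fix x y assume x: "x \<in> N" and y: "y \<in> N" and eq: "{p\<in>P. le p x} = {p\<in>P. le p y}"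
    have xM: "x \<in> M" and yM: "y \<in> M" using x y unfolding N_def by auto
    have "le x y" using x yM eq unfolding N_def by blast
    moreover have "le y x" using y xM eq unfolding N_def by blast
    ultimately show "x = y" using le_antisym xM yM by simp
  qed
  moreover have "finite ((\<lambda>x. {p\<in>P. le p x}) ` N)"
    by (rule finite_subset[of _ "Pow P"]) (use finP in auto)
  ultimately have "finite N" using finite_imageD by blast
  then show ?thesis using NM by simp
qed


lemma main:
  assumes "bg_fin_gen G M add zero smul"
  shows "\<exists>n N f. bg_submodule G N (bg_free G n) bg_free_add bg_free_zero (bg_free_smul G)
            \<and> bij_betw f M N
            \<and> bg_module_hom G f M add zero smul N bg_free_add bg_free_zero (bg_free_smul G)"
proof -
  have finM: "finite M" using M_finite assms by simp
  obtain e where e: "bij_betw e {0..<card M} M" using ex_bij_betw_nat_finite[OF finM] by blast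
  define n where "n = card M"
  define f where "f x = (\<lambda>i. if i < n then {g \<in> carrier G. \<not> le (smul {inv g} x) (e i)} else {})" for x
  have eM: "e i \<in> M" if "i < n" for i using e that unfolding n_def bij_betw_def by auto
  have f_free: "f x \<in> bg_free G n" for x unfolding f_def bg_free_def bg_elems_def by auto
  have f_add: "f (add x y) = bg_free_add (f x) (f y)" if x: "x \<in> M" and y: "y \<in> M" for x y
  proof
    fix i show "f (add x y) i = bg_free_add (f x) (f y) i"
      unfolding f_def bg_free_add_def
      using smul_add[of _ x y] le_add_iff smul_in x y eM by auto
  qed
  have f_zero: "f zero = bg_free_zero"
  proof
    fix i show "f zero i = bg_free_zero i"
      unfolding f_def bg_free_zero_def using smul_zero le_zero eM by auto
  qed
  have f_smul: "f (smul A x) = bg_free_smul G A (f x)" if A: "A \<in> bg_elems G" and x: "x \<in> M" for A x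
  proof
    fix i
    have AG: "A \<subseteq> carrier G" using A unfolding bg_elems_def by auto
    have finA: "finite A" using AG finG finite_subset by auto
    show "f (smul A x) i = bg_free_smul G A (f x) i"
    proof (cases "i < n")
      case False
      then show ?thesis unfolding f_def bg_free_smul_def bg_mult_def by auto
    next
      case True
      have m: "e i \<in> M" using eM True by simp
      have key: "g \<in> carrier G \<Longrightarrow> le (smul {inv g} (smul A x)) (e i) \<longleftrightarrow> (\<forall>a\<in>A. le (smul {inv g \<otimes> a} x) (e i))" for g
      proof -
        assume g: "g \<in> carrier G"
        have "smul {inv g} (smul A x) = smul ((\<lambda>a. inv g \<otimes> a) ` A) x"
          using smul_mult[of "{inv g}" A x] bg_mult_single AG g x by simp
        moreover have "le (smul ((\<lambda>a. inv g \<otimes> a) ` A) x) (e i) \<longleftrightarrow> (\<forall>a\<in>A. le (smul {inv g \<otimes> a} x) (e i))"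
          using smul_le_iff[of "(\<lambda>a. inv g \<otimes> a) ` A" x "e i"] finA AG g x m by auto
        ultimately show ?thesis by simp
      qed
      show ?thesis
      proof
        show "f (smul A x) i \<subseteq> bg_free_smul G A (f x) i"
        proof
          fix g assume "g \<in> f (smul A x) i"
          then have g: "g \<in> carrier G" and ng: "\<not> le (smul {inv g} (smul A x)) (e i)"
            unfolding f_def using True by auto
          then obtain a where a: "a \<in> A" and na: "\<not> le (smul {inv g \<otimes> a} x) (e i)" using key by blast
          have aG: "a \<in> carrier G" using a AG by auto
          define h where "h = inv a \<otimes> g"
          have hG: "h \<in> carrier G" using aG g h_def by simp
          have "inv h = inv g \<otimes> a" unfolding h_def using aG g by (simp add: inv_mult_group)
          then have "h \<in> f x i" unfolding f_def using True hG na by simp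
          moreover have "g = a \<otimes> h" unfolding h_def using aG g by (simp add: m_assoc[symmetric])
          ultimately show "g \<in> bg_free_smul G A (f x) i"
            unfolding bg_free_smul_def bg_mult_def using a by blast
        qed
      next
        show "bg_free_smul G A (f x) i \<subseteq> f (smul A x) i"
        proof
          fix g assume "g \<in> bg_free_smul G A (f x) i"
          then obtain a h where a: "a \<in> A" and h: "h \<in> f x i" and gah: "g = a \<otimes> h"
            unfolding bg_free_smul_def bg_mult_def by blast
          have aG: "a \<in> carrier G" using a AG by auto
          have hG: "h \<in> carrier G" and nh: "\<not> le (smul {inv h} x) (e i)"
            using h True unfolding f_def by auto
          have gG: "g \<in> carrier G" using gah aG hG by simp
          have "inv g \<otimes> a = inv h" using gah aG hG
            by (simp add: inv_mult_group m_assoc)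
          then have "\<not> le (smul {inv g} (smul A x)) (e i)" using key[OF gG] a nh by auto
          then show "g \<in> f (smul A x) i" unfolding f_def using True gG by simp
        qed
      qed
    qed
  qed
  have inj: "inj_on f M"
  proof (rule inj_onI, rule ccontr)
    fix x y assume x: "x \<in> M" and y: "y \<in> M" and eq: "f x = f y" and ne: "x \<noteq> y"
    have "\<not> le x y \<or> \<not> le y x" using le_antisym x y ne by blast
    then show False
    proof
      assume nl: "\<not> le x y"
      obtain i where i: "i < n" "e i = y" using e y unfolding n_def bij_betw_def by (metis atLeastLessThan_iff imageE)
      have "\<one> \<in> f x i" unfolding f_def using i nl smul_one x by simp
      moreover have "\<one> \<notin> f y i" unfolding f_def using i le_refl smul_one y by simp
      ultimately show False using eq by simp
    next
      assume nl: "\<not> le y x"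
      obtain i where i: "i < n" "e i = x" using e x unfolding n_def bij_betw_def by (metis atLeastLessThan_iff imageE)
      have "\<one> \<in> f y i" unfolding f_def using i nl smul_one y by simp
      moreover have "\<one> \<notin> f x i" unfolding f_def using i le_refl smul_one x by simp
      ultimately show False using eq by simp
    qed
  qed
  have sub: "bg_submodule G (f ` M) (bg_free G n) bg_free_add bg_free_zero (bg_free_smul G)"
    unfolding bg_submodule_def
  proof (intro conjI ballI)
    show "f ` M \<subseteq> bg_free G n" using f_free by auto
    show "bg_free_zero \<in> f ` M" using f_zero zero_in by force
  next
    fix u v assume "u \<in> f ` M" "v \<in> f ` M"
    then obtain x y where "x \<in> M" "y \<in> M" "u = f x" "v = f y" by blast
    then show "bg_free_add u v \<in> f ` M" using f_add add_in by (metis image_eqI)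
  next
    fix A u assume A: "A \<in> bg_elems G" and "u \<in> f ` M"
    then obtain x where "x \<in> M" "u = f x" by blast
    moreover have "A \<subseteq> carrier G" using A unfolding bg_elems_def by auto
    ultimately show "bg_free_smul G A u \<in> f ` M" using f_smul A smul_in by (metis image_eqI)
  qed
  have hom: "bg_module_hom G f M add zero smul (f ` M) bg_free_add bg_free_zero (bg_free_smul G)"
    unfolding bg_module_hom_def using f_add f_zero f_smul by auto
  show ?thesis using sub hom inj unfolding bij_betw_def by blast
qed


end

theorem corollary4p9:
  fixes G :: "('g, 'b) monoid_scheme"
    and M :: "'m set" and add :: "'m \<Rightarrow> 'm \<Rightarrow> 'm" and zero :: 'm
    and smul :: "'g set \<Rightarrow> 'm \<Rightarrow> 'm"
  assumes "group G" and "finite (carrier G)"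
    and "bg_module G M add zero smul"
    and "bg_fin_gen G M add zero smul"
  shows "\<exists>n N f. bg_submodule G N (bg_free G n) bg_free_add bg_free_zero (bg_free_smul G)
            \<and> bij_betw f M N
            \<and> bg_module_hom G f M add zero smul N bg_free_add bg_free_zero (bg_free_smul G)"

  using bgm.main[of G M add zero smul] assms by (simp add: bgm_def bgm_axioms_def)

end
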